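(* Let $A$ be a vertex of a phylogenetic quiver $\mathcal O$, let $B$ be a vertex of the clade $\mathcal O_A$, and set $m=h(A)$, $n=h(B)$ (so $n\ge m$). If $p^{n-m}([B])=[A]$, then $B$ is a phylogenetic vertex of $\mathcal O_A$ and $h_A(B)=n-m$.
   Context: A quiver consists of a class of vertices and, for each ordered pair of vertices $(A,B)$, a set of edges $A\to B$ (loops and multiple edges allowed). An evolution of length $m\ge 0$ is a sequence $A_0\leftarrow A_1\leftarrow\cdots\leftarrow A_m$ of vertices together with edges $A_k\to A_{k-1}$ ($1\le k\le m$); $A_0$ is its initial and $A_m$ its terminal vertex. Write $A\le B$ ($A$ is an ancestor of $B$, $B$ a descendant of $A$) if there is an evolution with initial vertex $A$ and terminal vertex $B$; $A,B$ are isotypic ($A\sim B$) if $A\le B$ and $B\le A$. A vertex $A$ is primitive if every ancestor of $A$ is isotypic to $A$. A full evolution for $X$ is an evolution with primitive initial vertex and terminal vertex $X$. The height $h(X)$ is the smallest length of a full evolution for $X$ ($\infty$ if none). An evolution $\alpha=(A_0\leftarrow\cdots\leftarrow A_m)$ embeds in $\beta=(B_0\leftarrow\cdots\leftarrow B_n)$ if $m\le n$ and there are $0\le r_0<\cdots<r_m\le n$ with $A_k\sim B_{r_k}$. A universal evolution for $X$ is a full evolution for $X$ embedding in every full evolution for $X$; $X$ is phylogenetic if one exists. A quiver is monotonous if $h(A)\ge h(B)$ for every edge $A\to B$; small if its isotypy classes form a set; phylogenetic if small, monotonous, and all vertices phylogenetic. For a phylogenetic quiver, $[A]$ denotes the isotypy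 class of $A$, $\mathcal O_m$ the set of isotypy classes of vertices of height $m$, and for $m\ge1$ the parental map $p:\mathcal O_m\to\mathcal O_{m-1}$ is $p([A])=[A_{m-1}]$ where $A_0\leftarrow\cdots\leftarrow A_{m-1}\leftarrow A_m=A$ is any universal evolution for $A$ (well defined); $p^0$ is the identity. The clade $\mathcal O_A$ is the quiver formed by all descendants of $A$ in $\mathcal O$ and all edges between them; $h_A$ denotes height computed in $\mathcal O_A$, and phylogeneticity in $\mathcal O_A$ is likewise computed within $\mathcal O_A$. *)

theory Defs
  imports Main "HOL-Library.Extended_Nat"
begin

text \<open>A quiver is given by a vertex set V and an edge relation E (E a b means: there is
  at least one edge a \<rightarrow> b).\<close>

definition evol :: "'v set \<Rightarrow> ('v \<Rightarrow> 'v \<Rightarrow> bool) \<Rightarrow> 'v list \<Rightarrow> bool" where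
  "evol V E xs \<longleftrightarrow> xs \<noteq> [] \<and> set xs \<subseteq> V \<and>
     (\<forall>k. 0 < k \<and> k < length xs \<longrightarrow> E (xs ! k) (xs ! (k - 1)))"

definition evol_len :: "'v list \<Rightarrow> nat" where
  "evol_len xs = length xs - 1"

definition anc :: "'v set \<Rightarrow> ('v \<Rightarrow> 'v \<Rightarrow> bool) \<Rightarrow> 'v \<Rightarrow> 'v \<Rightarrow> bool" where
  "anc V E a b \<longleftrightarrow> (\<exists>xs. evol V E xs \<and> hd xs = a \<and> last xs = b)"

definition iso :: "'v set \<Rightarrow> ('v \<Rightarrow> 'v \<Rightarrow> bool) \<Rightarrow> 'v \<Rightarrow> 'v \<Rightarrow> bool" where
  "iso V E a b \<longleftrightarrow> anc V E a b \<and> anc V E b a"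

definition primitive :: "'v set \<Rightarrow> ('v \<Rightarrow> 'v \<Rightarrow> bool) \<Rightarrow> 'v \<Rightarrow> bool" where
  "primitive V E a \<longleftrightarrow> a \<in> V \<and> (\<forall>b. anc V E b a \<longrightarrow> iso V E b a)"

definition full_evol :: "'v set \<Rightarrow> ('v \<Rightarrow> 'v \<Rightarrow> bool) \<Rightarrow> 'v list \<Rightarrow> 'v \<Rightarrow> bool" where
  "full_evol V E xs x \<longleftrightarrow> evol V E xs \<and> primitive V E (hd xs) \<and> last xs = x"

text \<open>Height: least length of a full evolution; infinity if none (Inf of the empty set).\<close>
definition height :: "'v set \<Rightarrow> ('v \<Rightarrow> 'v \<Rightarrow> bool) \<Rightarrow> 'v \<Rightarrow> enat" where
  "height V E x = (INF xs \<in> {xs. full_evol V E xs x}. enat (evol_len xs))"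

definition embeds :: "'v set \<Rightarrow> ('v \<Rightarrow> 'v \<Rightarrow> bool) \<Rightarrow> 'v list \<Rightarrow> 'v list \<Rightarrow> bool" where
  "embeds V E xs ys \<longleftrightarrow> length xs \<le> length ys \<and>
     (\<exists>r. strict_mono_on {..<length xs} r \<and>
          (\<forall>k < length xs. r k < length ys \<and> iso V E (xs ! k) (ys ! r k)))"

definition universal :: "'v set \<Rightarrow> ('v \<Rightarrow> 'v \<Rightarrow> bool) \<Rightarrow> 'v list \<Rightarrow> 'v \<Rightarrow> bool" where
  "universal V E xs x \<longleftrightarrow> full_evol V E xs x \<and>
     (\<forall>ys. full_evol V E ys x \<longrightarrow> embeds V E xs ys)"

definition phylo_vertex :: "'v set \<Rightarrow> ('v \<Rightarrow> 'v \<Rightarrow> bool) \<Rightarrow> 'v \<Rightarrow> bool" where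
  "phylo_vertex V E x \<longleftrightarrow> (\<exists>xs. universal V E xs x)"

definition monotonous :: "'v set \<Rightarrow> ('v \<Rightarrow> 'v \<Rightarrow> bool) \<Rightarrow> bool" where
  "monotonous V E \<longleftrightarrow> (\<forall>a\<in>V. \<forall>b\<in>V. E a b \<longrightarrow> height V E a \<ge> height V E b)"

text \<open>Smallness is automatic in HOL (isotypy classes are sets of a type).\<close>
definition phylo_quiver :: "'v set \<Rightarrow> ('v \<Rightarrow> 'v \<Rightarrow> bool) \<Rightarrow> bool" where
  "phylo_quiver V E \<longleftrightarrow> monotonous V E \<and> (\<forall>x\<in>V. phylo_vertex V E x)"

definition iso_class :: "'v set \<Rightarrow> ('v \<Rightarrow> 'v \<Rightarrow> bool) \<Rightarrow> 'v \<Rightarrow> 'v set" where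
  "iso_class V E a = {b. iso V E a b}"

text \<open>Parental map on isotypy classes: pick a representative a of the class and a universal
  evolution [A_0,...,A_m] for it, and return the class of A_(m-1) (well defined by the paper).\<close>
definition parent :: "'v set \<Rightarrow> ('v \<Rightarrow> 'v \<Rightarrow> bool) \<Rightarrow> 'v set \<Rightarrow> 'v set" where
  "parent V E C = (let (a, xs) = (SOME (a, xs). a \<in> C \<and> universal V E xs a)
                   in iso_class V E (xs ! (evol_len xs - 1)))"

definition clade_V :: "'v set \<Rightarrow> ('v \<Rightarrow> 'v \<Rightarrow> bool) \<Rightarrow> 'v \<Rightarrow> 'v set" where
  "clade_V V E a = {b. anc V E a b}"

definition clade_E :: "'v set \<Rightarrow> ('v \<Rightarrow> 'v \<Rightarrow> bool) \<Rightarrow> 'v \<Rightarrow> 'v \<Rightarrow> 'v \<Rightarrow> bool" where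
  "clade_E V E a x y \<longleftrightarrow> E x y \<and> x \<in> clade_V V E a \<and> y \<in> clade_V V E a"

end

theory Submission imports Defs begin

lemma evol_alt: "evol V E xs \<longleftrightarrow> xs \<noteq> [] \<and> set xs \<subseteq> V \<and> (\<forall>k. Suc k < length xs \<longrightarrow> E (xs ! Suc k) (xs ! k))"
  unfolding evol_def
  by (metis Suc_pred diff_Suc_1 zero_less_Suc)

lemma evol_append:
  assumes "evol V E xs" "evol V E ys" "last xs = hd ys"
  shows "evol V E (xs @ tl ys)"
proof -
  have ne: "xs \<noteq> []" "ys \<noteq> []" using assms unfolding evol_def by auto
  have s: "set (xs @ tl ys) \<subseteq> V" using assms unfolding evol_def
    by (auto dest: list.set_sel(2))
  have "E ((xs @ tl ys) ! Suc k) ((xs @ tl ys) ! k)" if k: "Suc k < length (xs @ tl ys)" for k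
  proof -
    consider "Suc k < length xs" | "Suc k = length xs" | "Suc k > length xs" by linarith
    then show ?thesis
    proof cases
      case 1 then show ?thesis using assms(1) by (simp add: evol_alt nth_append)
    next
      case 2
      have l: "length ys > 1" using k 2 by simp
      have "(xs @ tl ys) ! Suc k = ys ! 1" using 2 l by (simp add: nth_append nth_tl)
      moreover have "(xs @ tl ys) ! k = ys ! 0"
      proof -
        have kk: "k = length xs - Suc 0" "k < length xs" using 2 by simp_all
        show ?thesis using kk assms(3) ne by (simp add: nth_append last_conv_nth hd_conv_nth)
      qed
      ultimately show ?thesis using assms(2) l by (simp add: evol_alt)
    next
      case 3
      define d where "d = k - length xs"
      have kd: "k = length xs + d" using 3 d_def by simp
      have dl: "Suc (Suc d) < length ys" using k kd by auto
      have a1: "(xs @ tl ys) ! Suc k = ys ! Suc (Suc d)"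
        using dl kd by (auto simp: nth_append nth_tl)
      have a2: "(xs @ tl ys) ! k = ys ! Suc d"
        using dl kd by (auto simp: nth_append nth_tl)
      have "E (ys ! Suc (Suc d)) (ys ! Suc d)" using assms(2) dl unfolding evol_alt by blast
      then show ?thesis using a1 a2 by simp
    qed
  qed
  then show ?thesis using ne s by (simp add: evol_alt)
qed

lemma evol_append_hd_last:
  assumes "evol V E xs" "evol V E ys" "last xs = hd ys"
  shows "hd (xs @ tl ys) = hd xs" "last (xs @ tl ys) = last ys"
proof -
  have ne: "xs \<noteq> []" "ys \<noteq> []" using assms unfolding evol_def by auto
  show "hd (xs @ tl ys) = hd xs" using ne by simp
  show "last (xs @ tl ys) = last ys"
  proof (cases "tl ys = []")
    case True
    then have "ys = [hd ys]" using ne by (cases ys) auto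
    then have "last ys = hd ys" by (metis last.simps)
    then show ?thesis using True assms(3) by simp
  next
    case False
    then show ?thesis using ne by (simp add: last_tl)
  qed
qed

lemma evol_take: "evol V E xs \<Longrightarrow> 0 < k \<Longrightarrow> evol V E (take k xs)"
  unfolding evol_alt by (auto dest: in_set_takeD)

lemma evol_drop: "evol V E xs \<Longrightarrow> i < length xs \<Longrightarrow> evol V E (drop i xs)"
  unfolding evol_alt by (auto dest: in_set_dropD)

lemma evol_nth_V: "evol V E xs \<Longrightarrow> i < length xs \<Longrightarrow> xs ! i \<in> V"
  unfolding evol_def by auto

lemma evol_edge: "evol V E xs \<Longrightarrow> Suc k < length xs \<Longrightarrow> E (xs ! Suc k) (xs ! k)"
  unfolding evol_alt by auto

lemma anc_nth:
  assumes "evol V E xs" "i \<le> j" "j < length xs"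
  shows "anc V E (xs ! i) (xs ! j)"
proof -
  let ?ys = "take (j - i + 1) (drop i xs)"
  have "evol V E ?ys" using assms by (intro evol_take evol_drop) auto
  moreover have "hd ?ys = xs ! i" using assms by (simp add: hd_drop_conv_nth)
  moreover have "last ?ys = xs ! j" using assms by (simp add: last_conv_nth)
  ultimately show ?thesis unfolding anc_def by blast
qed

lemma anc_refl: "a \<in> V \<Longrightarrow> anc V E a a"
  unfolding anc_def evol_def by (rule exI[of _ "[a]"]) auto

lemma anc_V: "anc V E a b \<Longrightarrow> a \<in> V \<and> b \<in> V"
  unfolding anc_def evol_def by (auto)

lemma anc_trans: "anc V E a b \<Longrightarrow> anc V E b c \<Longrightarrow> anc V E a c"
proof -
  assume "anc V E a b" "anc V E b c"
  then obtain xs ys where xs: "evol V E xs" "hd xs = a" "last xs = b"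
    and ys: "evol V E ys" "hd ys = b" "last ys = c" unfolding anc_def by blast
  have l: "last xs = hd ys" using xs ys by simp
  show "anc V E a c" unfolding anc_def
    using evol_append[OF xs(1) ys(1) l] evol_append_hd_last[OF xs(1) ys(1) l] xs ys by blast
qed

lemma iso_sym: "iso V E a b \<Longrightarrow> iso V E b a" unfolding iso_def by auto
lemma iso_trans: "iso V E a b \<Longrightarrow> iso V E b c \<Longrightarrow> iso V E a c"
  unfolding iso_def using anc_trans[of V E a b c] anc_trans[of V E c b a] by blast
lemma iso_refl: "a \<in> V \<Longrightarrow> iso V E a a" unfolding iso_def using anc_refl[of a V E] by blast

lemma iso_class_eq:
  assumes h: "iso V E a b" shows "iso_class V E a = iso_class V E b"
proof -
  have "iso V E a c \<longleftrightarrow> iso V E b c" for c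
    using iso_trans[OF iso_sym[OF h], of c] iso_trans[OF h, of c] by blast
  then show ?thesis unfolding iso_class_def by (intro Collect_cong) simp
qed

lemma height_le: "full_evol V E xs x \<Longrightarrow> height V E x \<le> enat (evol_len xs)"
  unfolding height_def by (rule INF_lower) auto

lemma height_ge: "(\<And>ys. full_evol V E ys x \<Longrightarrow> k \<le> evol_len ys) \<Longrightarrow> enat k \<le> height V E x"
  unfolding height_def by (rule INF_greatest) auto

lemma embeds_len: "embeds V E xs ys \<Longrightarrow> length xs \<le> length ys"
  unfolding embeds_def by auto

lemma universal_height: "universal V E xs x \<Longrightarrow> height V E x = enat (evol_len xs)"
proof -
  assume u: "universal V E xs x"
  have "height V E x \<le> enat (evol_len xs)" using u unfolding universal_def by (intro height_le) auto
  moreover have "enat (evol_len xs) \<le> height V E x"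
  proof (rule height_ge)
    fix ys assume "full_evol V E ys x"
    then have "length xs \<le> length ys" using u unfolding universal_def by (auto dest!: embeds_len)
    then show "evol_len xs \<le> evol_len ys" unfolding evol_len_def by simp
  qed
  ultimately show ?thesis by simp
qed

lemma smono_ge:
  fixes k L :: nat assumes "strict_mono_on {..<L} r"
  shows "k < L \<Longrightarrow> k \<le> r k"
proof (induction k)
  case 0 then show ?case by simp
next
  case (Suc k)
  then have "r k < r (Suc k)" using assms(1) unfolding strict_mono_on_def by auto
  then show ?case using Suc by simp
qed

lemma monotonous_evol:
  assumes "monotonous V E" "evol V E xs" "i \<le> j" "j < length xs"
  shows "height V E (xs ! i) \<le> height V E (xs ! j)"
  using assms(3,4)
proof (induction j)
  case 0 then show ?case by simp
next
  case (Suc j)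
  show ?case
  proof (cases "i = Suc j")
    case True then show ?thesis by simp
  next
    case False
    then have "height V E (xs ! i) \<le> height V E (xs ! j)" using Suc by simp
    moreover have "height V E (xs ! j) \<le> height V E (xs ! Suc j)"
    proof -
      have "xs ! j \<in> V" "xs ! Suc j \<in> V" "E (xs ! Suc j) (xs ! j)"
        using evol_edge[OF assms(2)] evol_nth_V[OF assms(2)] Suc.prems by auto
      then show ?thesis using assms(1) unfolding monotonous_def by blast
    qed
    ultimately show ?thesis by simp
  qed
qed

lemma monotonous_anc: "monotonous V E \<Longrightarrow> anc V E a b \<Longrightarrow> height V E a \<le> height V E b"
proof -
  assume m: "monotonous V E" and "anc V E a b"
  then obtain xs where xs: "evol V E xs" "hd xs = a" "last xs = b" unfolding anc_def by blast
  then have ne: "xs \<noteq> []" unfolding evol_def by simp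
  have "height V E (xs ! 0) \<le> height V E (xs ! (length xs - 1))"
    using ne by (intro monotonous_evol[OF m xs(1)]) auto
  then show ?thesis using xs ne by (simp add: hd_conv_nth last_conv_nth)
qed

lemma monotonous_iso: "monotonous V E \<Longrightarrow> iso V E a b \<Longrightarrow> height V E a = height V E b"
  using monotonous_anc[of V E a b] monotonous_anc[of V E b a] unfolding iso_def by auto


lemma univ_nth_height:
  assumes u: "universal V E xs x" and j: "j < length xs"
  shows "height V E (xs ! j) = enat j"
proof -
  have ev: "evol V E xs" and pr: "primitive V E (hd xs)" and lx: "last xs = x"
    using u unfolding universal_def full_evol_def by auto
  have ne: "xs \<noteq> []" using ev unfolding evol_def by simp
  have f1: "full_evol V E (take (Suc j) xs) (xs ! j)"
    unfolding full_evol_def using ev pr j ne by (auto intro: evol_take simp: last_conv_nth)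
  have "height V E (xs!j) \<le> enat j" using height_le[OF f1] j by (simp add: evol_len_def)
  moreover have "enat j \<le> height V E (xs ! j)"
  proof (rule height_ge)
    fix ys assume f: "full_evol V E ys (xs ! j)"
    let ?zs = "ys @ tl (drop j xs)"
    have e1: "evol V E ys" "last ys = xs ! j" "primitive V E (hd ys)"
      using f unfolding full_evol_def by auto
    have e2: "evol V E (drop j xs)" using evol_drop ev j by auto
    have hdd: "hd (drop j xs) = xs ! j" using j by (simp add: hd_drop_conv_nth)
    have ld: "last (drop j xs) = x" using j lx by simp
    have "full_evol V E ?zs x" unfolding full_evol_def
      using evol_append[OF e1(1) e2] evol_append_hd_last[OF e1(1) e2] e1 hdd ld by simp
    then have "embeds V E xs ?zs" using u unfolding universal_def by blast
    then have "length xs \<le> length ?zs" by (rule embeds_len)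
    then show "j \<le> evol_len ys" using j unfolding evol_len_def by simp
  qed
  ultimately show ?thesis by simp
qed

lemma parent_step:
  assumes pq: "phylo_quiver V E" and u: "universal V E xs x" and i: "0 < i" "i < length xs"
  shows "parent V E (iso_class V E (xs ! i)) = iso_class V E (xs ! (i - 1))"
proof -
  have mono: "monotonous V E" using pq unfolding phylo_quiver_def by simp
  have ev: "evol V E xs" and pr: "primitive V E (hd xs)" and lx: "last xs = x"
    using u unfolding universal_def full_evol_def by auto
  have ne: "xs \<noteq> []" using ev unfolding evol_def by simp
  let ?c = "xs ! i"
  have cV: "?c \<in> V" using evol_nth_V[OF ev i(2)] .
  obtain us where us: "universal V E us ?c"
    using pq cV unfolding phylo_quiver_def phylo_vertex_def by blast
  have ex: "\<exists>p. case p of (a, xs) \<Rightarrow> a \<in> iso_class V E ?c \<and> universal V E xs a"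
    using iso_refl[OF cV] us by (intro exI[of _ "(?c, us)"]) (auto simp: iso_class_def)
  obtain a ys where ay: "(SOME (a, xs). a \<in> iso_class V E ?c \<and> universal V E xs a) = (a, ys)"
    by (metis surj_pair)
  have P: "a \<in> iso_class V E ?c \<and> universal V E ys a" using someI_ex[OF ex] ay by simp
  have par: "parent V E (iso_class V E ?c) = iso_class V E (ys ! (evol_len ys - 1))"
    unfolding parent_def using ay by simp
  have ca: "iso V E ?c a" using P by (simp add: iso_class_def)
  have uy: "universal V E ys a" using P by simp
  have hc: "height V E ?c = enat i" using univ_nth_height[OF u i(2)] .
  have "height V E a = enat i" using monotonous_iso[OF mono ca] hc by simp
  then have ly: "evol_len ys = i" using universal_height[OF uy] by simp
  have lys: "length ys = Suc i" using ly i unfolding evol_len_def by simp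
  obtain ps where ps: "evol V E ps" "hd ps = ?c" "last ps = a"
    using ca unfolding iso_def anc_def by blast
  have nps: "ps \<noteq> []" using ps unfolding evol_def by simp
  let ?t = "take (Suc i) xs"
  let ?zs = "?t @ tl ps"
  have et: "evol V E ?t" using evol_take[OF ev] by simp
  have lt: "last ?t = ?c" using i by (subst last_conv_nth) auto
  have ez: "evol V E ?zs" using evol_append[OF et ps(1)] lt ps(2) by simp
  have hz: "hd ?zs = hd xs" "last ?zs = a"
    using evol_append_hd_last[OF et ps(1)] lt ps ne by auto
  have fz: "full_evol V E ?zs a" unfolding full_evol_def using ez hz pr by simp
  then have "embeds V E ys ?zs" using uy unfolding universal_def by blast
  then obtain r where sm: "strict_mono_on {..<length ys} r"
    and rr: "\<forall>k<length ys. r k < length ?zs \<and> iso V E (ys ! k) (?zs ! r k)"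
    unfolding embeds_def by blast
  define p where "p = r (i - 1)"
  have p1: "i - 1 \<le> p" using smono_ge[OF sm] lys i unfolding p_def by simp
  have p2: "p < length ?zs" "iso V E (ys ! (i-1)) (?zs ! p)" using rr lys i unfolding p_def by auto
  have hy: "height V E (ys ! (i-1)) = enat (i-1)" using univ_nth_height[OF uy] lys by simp
  have hzp: "height V E (?zs ! p) = enat (i - 1)" using monotonous_iso[OF mono p2(2)] hy by simp
  have lt2: "length ?t = Suc i" using i by simp
  have pe: "p = i - 1"
  proof (rule ccontr)
    assume pne: "p \<noteq> i - 1"
    show False
    proof (cases "p \<le> i")
      case True
      then have "?zs ! p = xs ! p" using i lt2 by (simp add: nth_append)
      then have "height V E (?zs ! p) = enat p" using univ_nth_height[OF u] True i by simp
      then show False using hzp pne by simp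
    next
      case False
      define q where "q = p - i"
      have sq: "Suc (p - Suc i) = p - i" using False by simp
      have q: "?zs ! p = ps ! q" "q < length ps"
        using False p2(1) lt2 sq unfolding q_def by (auto simp: nth_append nth_tl)
      have "anc V E ?c (ps ! q)" using anc_nth[OF ps(1), of 0 q] ps(2) q nps
        by (simp add: hd_conv_nth)
      then have h1: "height V E ?c \<le> height V E (ps ! q)" using monotonous_anc[OF mono] by blast
      have "anc V E (ps ! q) a" using anc_nth[OF ps(1), of q "length ps - 1"] ps(3) q nps
        by (simp add: last_conv_nth)
      then have h2: "height V E (ps ! q) \<le> height V E a" using monotonous_anc[OF mono] by blast
      have "height V E (ps ! q) = enat i" using h1 h2 hc \<open>height V E a = enat i\<close> by simp
      then show False using hzp q(1) i by simp
    qed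
  qed
  moreover have "?zs ! (i - 1) = xs ! (i - 1)"
  proof -
    have "i - 1 < length ?t" using lt2 by simp
    then have "?zs ! (i - 1) = ?t ! (i - 1)" by (rule nth_append_left)
    also have "\<dots> = xs ! (i - 1)" using i by simp
    finally show ?thesis .
  qed
  ultimately have "iso V E (ys ! (i-1)) (xs ! (i-1))" using p2 by simp
  then have "iso_class V E (ys ! (i-1)) = iso_class V E (xs ! (i-1))" by (rule iso_class_eq)
  then show ?thesis using par ly by simp
qed

lemma parent_iter:
  assumes pq: "phylo_quiver V E" and u: "universal V E xs x"
  shows "j \<le> evol_len xs \<Longrightarrow> (parent V E ^^ j) (iso_class V E x) = iso_class V E (xs ! (evol_len xs - j))"
proof (induction j)
  case 0
  have "xs \<noteq> []" "last xs = x" using u unfolding universal_def full_evol_def evol_def by auto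
  then show ?case by (simp add: evol_len_def last_conv_nth)
next
  case (Suc j)
  have ne: "xs \<noteq> []" using u unfolding universal_def full_evol_def evol_def by auto
  have "(parent V E ^^ Suc j) (iso_class V E x) = parent V E (iso_class V E (xs ! (evol_len xs - j)))"
    using Suc by simp
  also have "\<dots> = iso_class V E (xs ! (evol_len xs - j - 1))"
    using parent_step[OF pq u, of "evol_len xs - j"] Suc.prems ne unfolding evol_len_def by simp
  finally show ?case by simp
qed


lemma clade_sub: "clade_V V E A \<subseteq> V"
  unfolding clade_V_def using anc_V by fast

lemma clade_lift:
  assumes "evol V E xs" "anc V E A (hd xs)"
  shows "evol (clade_V V E A) (clade_E V E A) xs"
proof -
  have ne: "xs \<noteq> []" using assms(1) unfolding evol_def by simp
  have mem: "xs ! k \<in> clade_V V E A" if "k < length xs" for k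
  proof -
    have "anc V E (hd xs) (xs ! k)" using anc_nth[OF assms(1), of 0 k] that ne by (simp add: hd_conv_nth)
    then show ?thesis using anc_trans[OF assms(2)] unfolding clade_V_def by blast
  qed
  have "set xs \<subseteq> clade_V V E A" using mem by (auto simp: in_set_conv_nth)
  moreover have "clade_E V E A (xs ! Suc k) (xs ! k)" if "Suc k < length xs" for k
    using evol_edge[OF assms(1) that] mem[of k] mem[of "Suc k"] that unfolding clade_E_def by simp
  ultimately show ?thesis using ne unfolding evol_alt by blast
qed

lemma clade_down:
  assumes "evol (clade_V V E A) (clade_E V E A) xs" shows "evol V E xs"
proof -
  have "set xs \<subseteq> V" using assms clade_sub[of V E A] unfolding evol_def by blast
  moreover have "E (xs ! Suc k) (xs ! k)" if "Suc k < length xs" for k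
    using evol_edge[OF assms that] unfolding clade_E_def by simp
  ultimately show ?thesis using assms unfolding evol_alt by blast
qed

lemma clade_anc: "anc (clade_V V E A) (clade_E V E A) x y \<longleftrightarrow> anc V E x y \<and> anc V E A x"
proof
  assume "anc (clade_V V E A) (clade_E V E A) x y"
  then obtain xs where xs: "evol (clade_V V E A) (clade_E V E A) xs" "hd xs = x" "last xs = y"
    unfolding anc_def by blast
  then have "x \<in> clade_V V E A" unfolding evol_def by auto
  then have "anc V E A x" unfolding clade_V_def by simp
  moreover have "anc V E x y" unfolding anc_def using clade_down[OF xs(1)] xs(2,3) by blast
  ultimately show "anc V E x y \<and> anc V E A x" by simp
next
  assume h: "anc V E x y \<and> anc V E A x"
  then have h1: "anc V E x y" and h2: "anc V E A x" by simp_all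
  from h1 obtain xs where xs: "evol V E xs" "hd xs = x" "last xs = y" unfolding anc_def by blast
  have "evol (clade_V V E A) (clade_E V E A) xs" using clade_lift[OF xs(1)] xs(2) h2 by simp
  then show "anc (clade_V V E A) (clade_E V E A) x y" unfolding anc_def using xs(2,3) by blast
qed

lemma clade_iso: "iso (clade_V V E A) (clade_E V E A) x y \<longleftrightarrow> iso V E x y \<and> anc V E A x"
proof
  assume "iso (clade_V V E A) (clade_E V E A) x y"
  then show "iso V E x y \<and> anc V E A x" unfolding iso_def clade_anc by simp
next
  assume a: "iso V E x y \<and> anc V E A x"
  then have "anc V E A y" using anc_trans[of V E A x y] unfolding iso_def by simp
  then show "iso (clade_V V E A) (clade_E V E A) x y" using a unfolding iso_def clade_anc by simp
qed

lemma smono_len: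
  fixes N M :: nat
  assumes "strict_mono_on {..<N} r" "\<forall>k<N. r k < M"
  shows "N \<le> M"
proof (cases N)
  case 0 then show ?thesis by simp
next
  case (Suc N')
  then have "N' \<le> r N'" using smono_ge[OF assms(1)] by simp
  moreover have "r N' < M" using assms(2) Suc by simp
  ultimately show ?thesis using Suc by simp
qed


theorem lemma9p5:
  fixes V :: "'v set" and E :: "'v \<Rightarrow> 'v \<Rightarrow> bool" and A B :: 'v and m n :: nat
  assumes "phylo_quiver V E"
    and "A \<in> V"
    and "B \<in> clade_V V E A"
    and "height V E A = enat m"
    and "height V E B = enat n"
    and "(parent V E ^^ (n - m)) (iso_class V E B) = iso_class V E A"
  shows "phylo_vertex (clade_V V E A) (clade_E V E A) B
         \<and> height (clade_V V E A) (clade_E V E A) B = enat (n - m)"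
proof -
  note pq = assms(1)
  define CV where "CV = clade_V V E A"
  define CE where "CE = clade_E V E A"
  have mono: "monotonous V E" using pq unfolding phylo_quiver_def by simp
  have AB: "anc V E A B" using assms(3) unfolding clade_V_def by simp
  have BV: "B \<in> V" using anc_V[OF AB] by simp
  obtain xs where u: "universal V E xs B"
    using pq BV unfolding phylo_quiver_def phylo_vertex_def by blast
  have ev: "evol V E xs" and pr: "primitive V E (hd xs)" and lx: "last xs = B"
    using u unfolding universal_def full_evol_def by auto
  have ne: "xs \<noteq> []" using ev unfolding evol_def by simp
  have nl: "evol_len xs = n" using universal_height[OF u] assms(5) by simp
  have lxs: "length xs = Suc n" using nl ne unfolding evol_len_def by (cases xs) auto
  have mn: "m \<le> n" using monotonous_anc[OF mono AB] assms(4,5) by simp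
  have "iso_class V E (xs ! m) = iso_class V E A"
    using parent_iter[OF pq u, of "n - m"] nl mn assms(6) by simp
  moreover have "A \<in> iso_class V E A" using iso_refl[OF assms(2)] unfolding iso_class_def by simp
  ultimately have "A \<in> iso_class V E (xs ! m)" by simp
  then have xA: "iso V E (xs ! m) A" unfolding iso_class_def by simp
  have Axm: "anc V E A (xs ! m)" using xA unfolding iso_def by simp
  let ?ds = "drop m xs"
  have mlt: "m < length xs" using mn lxs by simp
  have hds: "hd ?ds = xs ! m" using mlt by (simp add: hd_drop_conv_nth)
  have lds: "last ?ds = B" using mlt lx by simp
  have eds: "evol CV CE ?ds" unfolding CV_def CE_def
    using clade_lift[OF evol_drop[OF ev mlt]] hds Axm by simp
  have mCV: "xs ! m \<in> CV" using Axm unfolding CV_def clade_V_def by simp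
  have prim: "primitive CV CE (xs ! m)"
    unfolding primitive_def
  proof (intro conjI allI impI)
    show "xs ! m \<in> CV" by (rule mCV)
    fix b assume "anc CV CE b (xs ! m)"
    then have bx: "anc V E b (xs ! m)" and Ab: "anc V E A b"
      unfolding CV_def CE_def clade_anc by auto
    have "anc V E (xs ! m) b" using anc_trans[OF _ Ab] xA unfolding iso_def by blast
    then show "iso CV CE b (xs ! m)" unfolding CV_def CE_def clade_iso using bx Ab by (simp add: iso_def)
  qed
  have fds: "full_evol CV CE ?ds B" unfolding full_evol_def using eds prim hds lds by simp
  have univ: "universal CV CE ?ds B"
    unfolding universal_def
  proof (intro conjI allI impI)
    show "full_evol CV CE ?ds B" by (rule fds)
    fix cs assume fc: "full_evol CV CE cs B"
    have ecC: "evol CV CE cs" and pc: "primitive CV CE (hd cs)" and lc: "last cs = B"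
      using fc unfolding full_evol_def by auto
    have ec: "evol V E cs" using ecC unfolding CV_def CE_def by (rule clade_down)
    have nec: "cs \<noteq> []" using ec unfolding evol_def by simp
    define c0 where "c0 = hd cs"
    have c0C: "c0 \<in> CV" using pc unfolding primitive_def c0_def by simp
    have Ac0: "anc V E A c0" using c0C unfolding CV_def clade_V_def by simp
    have "anc CV CE A c0" unfolding CV_def CE_def clade_anc using Ac0 anc_refl[OF assms(2)] by simp
    then have "iso CV CE A c0" using pc unfolding primitive_def c0_def by blast
    then have Aic0: "iso V E A c0" unfolding CV_def CE_def clade_iso by simp
    have hc0: "height V E c0 = enat m" using monotonous_iso[OF mono Aic0] assms(4) by simp
    obtain as where ua: "universal V E as A"
      using pq assms(2) unfolding phylo_quiver_def phylo_vertex_def by blast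
    have ea: "evol V E as" and pa: "primitive V E (hd as)" and la: "last as = A"
      using ua unfolding universal_def full_evol_def by auto
    obtain ps where ps: "evol V E ps" "hd ps = A" "last ps = c0"
      using Ac0 unfolding anc_def by blast
    define ws where "ws = as @ tl ps"
    have ew: "evol V E ws" unfolding ws_def using evol_append[OF ea ps(1)] la ps(2) by simp
    have hw: "hd ws = hd as" "last ws = c0"
      unfolding ws_def using evol_append_hd_last[OF ea ps(1)] la ps by auto
    define zs where "zs = ws @ tl cs"
    have ez: "evol V E zs" unfolding zs_def using evol_append[OF ew ec] hw c0_def by simp
    have hz: "hd zs = hd as" "last zs = B"
      unfolding zs_def using evol_append_hd_last[OF ew ec] hw c0_def lc by auto
    have fz: "full_evol V E zs B" unfolding full_evol_def using ez hz pa by simp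
    then have "embeds V E xs zs" using u unfolding universal_def by blast
    then obtain r where sm: "strict_mono_on {..<length xs} r"
      and rr: "\<forall>k<length xs. r k < length zs \<and> iso V E (xs ! k) (zs ! r k)"
      unfolding embeds_def by blast
    define L where "L = length ws"
    have nw: "ws \<noteq> []" using ew unfolding evol_def by simp
    have lz: "length zs = L + (length cs - 1)" unfolding zs_def L_def using nec by simp
    have rL: "L \<le> r i" if i: "m < i" "i < length xs" for i
    proof (rule ccontr)
      assume "\<not> L \<le> r i"
      then have ri: "r i < L" by simp
      have "zs ! r i = ws ! r i" unfolding zs_def using ri L_def by (simp add: nth_append_left)
      moreover have "anc V E (ws ! r i) c0"
        using anc_nth[OF ew, of "r i" "L - 1"] ri hw nw unfolding L_def by (simp add: last_conv_nth)
      ultimately have "height V E (zs ! r i) \<le> height V E c0"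
        using monotonous_anc[OF mono] by simp
      then have "height V E (zs ! r i) \<le> enat m" using hc0 by simp
      moreover have "height V E (zs ! r i) = enat i"
      proof -
        have "iso V E (xs ! i) (zs ! r i)" using rr i by simp
        then have "height V E (xs ! i) = height V E (zs ! r i)" by (rule monotonous_iso[OF mono])
        then show ?thesis using univ_nth_height[OF u i(2)] by simp
      qed
      ultimately show False using i by simp
    qed
    have zsc: "zs ! r i = cs ! Suc (r i - L)" if i: "m < i" "i < length xs" for i
    proof -
      have "L \<le> r i" "r i < length zs" using rL[OF i] rr i by auto
      then show ?thesis unfolding zs_def using L_def lz nec
        by (simp add: nth_append nth_tl)
    qed
    define r' where "r' = (\<lambda>j. if j = 0 then 0 else Suc (r (j + m) - L))"
    have lds2: "length ?ds = length xs - m" by simp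
    have r'b: "\<forall>k<length ?ds. r' k < length cs \<and> iso CV CE (?ds ! k) (cs ! r' k)"
    proof (intro allI impI)
      fix k assume k: "k < length ?ds"
      show "r' k < length cs \<and> iso CV CE (?ds ! k) (cs ! r' k)"
      proof (cases "k = 0")
        case True
        have "iso V E (xs ! m) c0" using iso_trans[OF xA Aic0] .
        then show ?thesis using True nec Axm mlt unfolding r'_def CV_def CE_def clade_iso c0_def
          by (simp add: hd_conv_nth)
      next
        case False
        have i: "m < k + m" "k + m < length xs" using False k by auto
        have b1: "L \<le> r (k + m)" "r (k + m) < length zs" using rL[OF i] rr i by auto
        have "iso V E (xs ! (k + m)) (cs ! r' k)"
          using rr i zsc[OF i] False unfolding r'_def by auto
        moreover have "anc V E A (xs ! (k + m))"
          using anc_trans[OF Axm anc_nth[OF ev, of m "k + m"]] i by simp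
        moreover have "r' k < length cs" using b1 lz False unfolding r'_def by simp
        ultimately show ?thesis using mlt unfolding CV_def CE_def clade_iso
          by (simp add: add.commute)
      qed
    qed
    have smr': "strict_mono_on {..<length ?ds} r'"
    proof (rule strict_mono_onI)
      fix j j' assume j: "j \<in> {..<length ?ds}" "j' \<in> {..<length ?ds}" "j < j'"
      then have j'0: "j' \<noteq> 0" by simp
      have i': "m < j' + m" "j' + m < length xs" using j j'0 by auto
      have L': "L \<le> r (j' + m)" using rL[OF i'] .
      show "r' j < r' j'"
      proof (cases "j = 0")
        case True then show ?thesis using j'0 unfolding r'_def by simp
      next
        case False
        have i: "m < j + m" "j + m < length xs" using j False by auto
        have L: "L \<le> r (j + m)" using rL[OF i] .
        have "r (j + m) < r (j' + m)" using sm j i i' unfolding strict_mono_on_def by auto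
        then show ?thesis using L L' False j'0 unfolding r'_def by simp
      qed
    qed
    have "length ?ds \<le> length cs" using r'b by (intro smono_len[OF smr']) auto
    then show "embeds CV CE ?ds cs" unfolding embeds_def using smr' r'b by (intro conjI exI[of _ r']) auto
  qed
  have "phylo_vertex CV CE B" unfolding phylo_vertex_def using univ by blast
  moreover have "height CV CE B = enat (n - m)"
    using universal_height[OF univ] lxs unfolding evol_len_def by simp
  ultimately show ?thesis unfolding CV_def CE_def by simp
qed

end
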